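(* Let $L$ be a frame. A filter $F\subseteq L$ is exact if and only if it is an intersection of filters of the form $\{a\in L\mid y\le a\vee x\}$ for some $x,y\in L$. More precisely, $F$ is exact if and only if $$F=\{a\in L\mid \forall x,y\in L\ \big((\forall f\in F,\ y\le f\vee x)\Rightarrow y\le a\vee x\big)\}.$$
   Context: A frame is a complete lattice $L$ with $(\bigvee A)\wedge b=\bigvee_{a\in A}(a\wedge b)$. A filter is a nonempty up-closed subset closed under finite meets. A meet $\bigwedge M$ ($M\subseteq L$) is exact if $(\bigwedge M)\vee b=\bigwedge_{a\in M}(a\vee b)$ for all $b\in L$; a filter is exact if it contains $\bigwedge M$ whenever $M\subseteq F$ and $\bigwedge M$ is exact. *)

theory Defs
  imports Main
begin

definition frame_law :: "'a::complete_lattice itself \<Rightarrow> bool" where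
  "frame_law _ \<longleftrightarrow> (\<forall>(A::'a set) b. inf (Sup A) b = (SUP a\<in>A. inf a b))"

definition is_filter :: "'a::complete_lattice set \<Rightarrow> bool" where
  "is_filter F \<longleftrightarrow> F \<noteq> {} \<and> (\<forall>a b. a \<in> F \<and> a \<le> b \<longrightarrow> b \<in> F)
     \<and> (\<forall>a\<in>F. \<forall>b\<in>F. inf a b \<in> F)"

definition exact_meet :: "'a::complete_lattice set \<Rightarrow> bool" where
  "exact_meet M \<longleftrightarrow> (\<forall>b. sup (Inf M) b = (INF a\<in>M. sup a b))"

definition exact_filter :: "'a::complete_lattice set \<Rightarrow> bool" where
  "exact_filter F \<longleftrightarrow> (\<forall>M. M \<subseteq> F \<and> exact_meet M \<longrightarrow> Inf M \<in> F)"

end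

theory Submission
  imports Defs
begin

theorem mainTheorem6:
  fixes F :: "'a::complete_lattice set"
  assumes "frame_law TYPE('a)"
    and "is_filter F"
  shows "exact_filter F \<longleftrightarrow>
    F = {a. \<forall>x y. (\<forall>f\<in>F. y \<le> sup f x) \<longrightarrow> y \<le> sup a x}"
proof -
  let ?G = "{a. \<forall>x y. (\<forall>f\<in>F. y \<le> sup f x) \<longrightarrow> y \<le> sup a x}"
  have FG: "F \<subseteq> ?G" by auto
  have up: "\<And>a b. a \<in> F \<Longrightarrow> a \<le> b \<Longrightarrow> b \<in> F" using assms(2) unfolding is_filter_def by blast
  show ?thesis
  proof
    assume ex: "exact_filter F"
    have "?G \<subseteq> F"
    proof
      fix a assume aG: "a \<in> ?G"
      let ?M = "(\<lambda>f. sup f a) ` F"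
      have MF: "?M \<subseteq> F" using up by auto
      have key: "\<And>c. a \<le> c \<Longrightarrow> (INF f\<in>F. sup f c) = c"
      proof -
        fix c assume ac: "a \<le> c"
        have "\<forall>f\<in>F. (INF g\<in>F. sup g c) \<le> sup f c" by (auto intro: INF_lower)
        hence "(INF g\<in>F. sup g c) \<le> sup a c" using aG by blast
        hence "(INF g\<in>F. sup g c) \<le> c" using ac by (simp add: sup_absorb2)
        moreover have "c \<le> (INF g\<in>F. sup g c)" by (auto intro: INF_greatest)
        ultimately show "(INF f\<in>F. sup f c) = c" by (rule antisym)
      qed
      have IM: "Inf ?M = a" using key[of a] by (simp add: image_image)
      have "exact_meet ?M"
        unfolding exact_meet_def
      proof
        fix b
        have "(INF m\<in>?M. sup m b) = (INF f\<in>F. sup f (sup a b))"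
          by (simp add: image_image sup_assoc)
        also have "\<dots> = sup a b" by (rule key) simp
        finally show "sup (Inf ?M) b = (INF m\<in>?M. sup m b)" using IM by simp
      qed
      with ex MF have "Inf ?M \<in> F" unfolding exact_filter_def by blast
      thus "a \<in> F" using IM by simp
    qed
    with FG show "F = ?G" by blast
  next
    assume eq: "F = ?G"
    show "exact_filter F"
      unfolding exact_filter_def
    proof (intro allI impI)
      fix M assume h: "M \<subseteq> F \<and> exact_meet M"
      have "Inf M \<in> ?G"
      proof (simp, intro allI impI)
        fix x y assume hy: "\<forall>f\<in>F. y \<le> sup f x"
        have "y \<le> (INF m\<in>M. sup m x)" using h hy by (auto intro: INF_greatest)
        also have "\<dots> = sup (Inf M) x" using h unfolding exact_meet_def by simp
        finally show "y \<le> sup (Inf M) x" .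
      qed
      thus "Inf M \<in> F" using eq by simp
    qed
  qed
qed

end
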